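(* Let $F$ be a complete Gårding–Dirichlet polynomial on $\mathrm{Sym}^2(\mathbb{R}^n)$ with Gårding cone $\Gamma$. Then for every $A\in\Gamma$ the gradient $(\nabla F)_A$ is positive definite; i.e. the linearization $B\mapsto\langle(\nabla F)_A,B\rangle$ at $A$ is uniformly elliptic.
   Context: $\mathrm{Sym}^2(\mathbb{R}^n)$ is the space of real symmetric $n\times n$ matrices with inner product $\langle A,B\rangle=\mathrm{tr}(AB)$; $(\nabla F)_A\in\mathrm{Sym}^2(\mathbb{R}^n)$ is the gradient of $F$ at $A$ for this inner product. A Gårding–Dirichlet (G-D) polynomial of degree $N$ on $\mathrm{Sym}^2(\mathbb{R}^n)$ is a real homogeneous polynomial $F$ of degree $N$ with $F(I)>0$ such that for every $A$ the polynomial $t\mapsto F(tI+A)$ has only real roots, and whose Gårding cone $\Gamma$ — the connected component of $\{A: F(A)\ne 0\}$ containing $I$ — contains all positive definite matrices. The edge of $F$ is $E=\overline\Gamma\cap(-\overline\Gamma)$, the largest linear subspace contained in $\overline\Gamma$. $F$ is called complete if $\mathcal{P}\cap E=\{0\}$, where $\mathcal{P}$ is the cone of positive semidefinite matrices. *)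

theory Defs
  imports "HOL-Analysis.Analysis" "HOL-Computational_Algebra.Polynomial"
begin

definition Sym2 :: "(real^'n^'n) set" where
  "Sym2 = {A. transpose A = A}"

definition pos_def :: "real^'n^'n \<Rightarrow> bool" where
  "pos_def A \<longleftrightarrow> (\<forall>x. x \<noteq> 0 \<longrightarrow> x \<bullet> (A *v x) > 0)"

definition pos_semidef :: "real^'n^'n \<Rightarrow> bool" where
  "pos_semidef A \<longleftrightarrow> (\<forall>x. x \<bullet> (A *v x) \<ge> 0)"

definition homog_poly_Sym2 :: "nat \<Rightarrow> (real^'n^'n \<Rightarrow> real) \<Rightarrow> bool" where
  "homog_poly_Sym2 N F \<longleftrightarrow>
     (\<exists>c :: ('n \<times> 'n \<Rightarrow> nat) \<Rightarrow> real.
        \<forall>A\<in>Sym2. F A = (\<Sum>\<alpha>\<in>{\<alpha>. (\<Sum>p\<in>UNIV. \<alpha> p) = N}.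
                          c \<alpha> * (\<Prod>p\<in>UNIV. (A $ fst p $ snd p) ^ \<alpha> p)))"

definition real_rooted_along_I :: "(real^'n^'n \<Rightarrow> real) \<Rightarrow> real^'n^'n \<Rightarrow> bool" where
  "real_rooted_along_I F A \<longleftrightarrow>
     (\<exists>p :: real poly. (\<forall>t. poly p t = F (t *\<^sub>R mat 1 + A)) \<and>
        (\<forall>z. poly (map_poly complex_of_real p) z = 0 \<longrightarrow> z \<in> \<real>))"

definition garding_cone :: "(real^'n^'n \<Rightarrow> real) \<Rightarrow> (real^'n^'n) set" where
  "garding_cone F = connected_component_set {A \<in> Sym2. F A \<noteq> 0} (mat 1)"

definition GD_poly :: "nat \<Rightarrow> (real^'n^'n \<Rightarrow> real) \<Rightarrow> bool" where
  "GD_poly N F \<longleftrightarrow> homog_poly_Sym2 N F \<and> F (mat 1) > 0 \<and>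
     (\<forall>A\<in>Sym2. real_rooted_along_I F A) \<and>
     (\<forall>A\<in>Sym2. pos_def A \<longrightarrow> A \<in> garding_cone F)"

definition edge :: "(real^'n^'n \<Rightarrow> real) \<Rightarrow> (real^'n^'n) set" where
  "edge F = {A. A \<in> closure (garding_cone F) \<and> - A \<in> closure (garding_cone F)}"

definition complete_GD :: "nat \<Rightarrow> (real^'n^'n \<Rightarrow> real) \<Rightarrow> bool" where
  "complete_GD N F \<longleftrightarrow> GD_poly N F \<and> {P\<in>Sym2. pos_semidef P} \<inter> edge F = {0}"

definition is_gradient :: "(real^'n^'n \<Rightarrow> real) \<Rightarrow> real^'n^'n \<Rightarrow> real^'n^'n \<Rightarrow> bool" where
  "is_gradient F A G \<longleftrightarrow> G \<in> Sym2 \<and>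
     (\<forall>B\<in>Sym2. ((\<lambda>t. F (A + t *\<^sub>R B)) has_real_derivative trace (G ** B)) (at 0))"

end

theory Submission
  imports Defs "HOL-Complex_Analysis.Complex_Analysis" "HOL-Computational_Algebra.Fundamental_Theorem_Algebra"
begin
lemma unif_lim_joint:
  fixes f :: "'a::heine_borel \<Rightarrow> complex \<Rightarrow> complex"
  assumes cont: "continuous_on (T \<times> UNIV) (\<lambda>(u,s). f u s)"
    and g: "\<And>n. g n \<in> T" "g \<longlonglongrightarrow> x" "x \<in> T" and K: "compact K"
  shows "uniform_limit K (\<lambda>n. f (g n)) (f x) sequentially"
proof -
  let ?D = "insert x (range g) \<times> K"
  have cD: "compact ?D" using compact_sequence_with_limit[OF g(2)] K by (rule compact_Times)
  have "?D \<subseteq> T \<times> UNIV" using g by auto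
  then have "continuous_on ?D (\<lambda>(u,s). f u s)" using cont continuous_on_subset by blast
  then have uc: "uniformly_continuous_on ?D (\<lambda>(u,s). f u s)"
    using cD compact_uniformly_continuous by blast
  show ?thesis unfolding uniform_limit_iff
  proof (intro allI impI)
    fix e :: real assume "e > 0"
    then obtain d where d: "d > 0" and
      dd: "\<And>a b. a \<in> ?D \<Longrightarrow> b \<in> ?D \<Longrightarrow> dist a b < d \<Longrightarrow> dist ((\<lambda>(u,s). f u s) a) ((\<lambda>(u,s). f u s) b) < e"
      using uc unfolding uniformly_continuous_on_def by metis
    have "\<forall>\<^sub>F n in sequentially. dist (g n) x < d" using g(2) d by (simp add: tendsto_iff)
    then show "\<forall>\<^sub>F n in sequentially. \<forall>s\<in>K. dist (f (g n) s) (f x s) < e"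
    proof (rule eventually_mono)
      fix n assume dn: "dist (g n) x < d"
      show "\<forall>s\<in>K. dist (f (g n) s) (f x s) < e"
      proof
        fix s assume "s \<in> K"
        then have "(g n, s) \<in> ?D" "(x,s) \<in> ?D" by auto
        moreover have "dist (g n, s) (x, s) < d" using dn by (simp add: dist_Pair_Pair)
        ultimately show "dist (f (g n) s) (f x s) < e" using dd by fastforce
      qed
    qed
  qed
qed

lemma zero_free_connected:
  fixes f :: "'a::heine_borel \<Rightarrow> complex \<Rightarrow> complex"
  assumes conT: "connected T" and u0: "u0 \<in> T"
    and Om: "open Om" "connected Om" and W: "closed W"
    and cont: "continuous_on (T \<times> UNIV) (\<lambda>(u,s). f u s)"
    and hol: "\<And>u. u \<in> T \<Longrightarrow> f u holomorphic_on Om"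
    and nc: "\<And>u. u \<in> T \<Longrightarrow> \<not> f u constant_on Om"
    and zW: "\<And>u s. u \<in> T \<Longrightarrow> f u s = 0 \<Longrightarrow> s \<in> W"
    and bd: "\<And>u s. u \<in> T \<Longrightarrow> s \<in> closure (Om \<inter> W) \<Longrightarrow> s \<notin> Om \<Longrightarrow> f u s \<noteq> 0"
    and rb: "\<And>u. u \<in> T \<Longrightarrow> \<exists>e>0. \<exists>R. \<forall>v\<in>T. dist v u < e \<longrightarrow> (\<forall>s. f v s = 0 \<longrightarrow> norm s \<le> R)"
    and z0: "\<And>s. s \<in> Om \<Longrightarrow> f u0 s \<noteq> 0"
    and uT: "u \<in> T" and sO: "s \<in> Om"
  shows "f u s \<noteq> 0"
proof -
  define Z where "Z = {u\<in>T. \<exists>s\<in>Om. f u s = 0}"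
  have c1: "closedin (top_of_set T) Z"
    unfolding closedin_limpt
  proof (intro conjI allI impI)
    show "Z \<subseteq> T" by (auto simp: Z_def)
    fix x assume "x islimpt Z \<and> x \<in> T"
    then have xl: "x islimpt Z" and xT: "x \<in> T" by auto
    obtain g where g: "\<And>n. g n \<in> Z - {x}" and gx: "g \<longlonglongrightarrow> x"
      using xl[unfolded islimpt_sequential] by blast
    have gT: "g n \<in> T" for n using g by (auto simp: Z_def)
    have "\<forall>n. \<exists>s. s \<in> Om \<and> f (g n) s = 0" using g unfolding Z_def by blast
    then obtain z where z: "\<forall>n. z n \<in> Om \<and> f (g n) (z n) = 0"
      by (rule choice[THEN exE]) (rule that)
    then have z: "\<And>n. z n \<in> Om" "\<And>n. f (g n) (z n) = 0" by auto
    obtain e R where e: "e > 0" and eR: "\<forall>v\<in>T. dist v x < e \<longrightarrow> (\<forall>s. f v s = 0 \<longrightarrow> norm s \<le> R)"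
      using rb[OF xT] by blast
    obtain n0 where n0: "\<And>n. n \<ge> n0 \<Longrightarrow> dist (g n) x < e"
      using gx e unfolding lim_sequentially by blast
    define z' where "z' n = z (n + n0)" for n
    define g' where "g' n = g (n + n0)" for n
    have "norm (z' n) \<le> R" for n
    proof -
      have "dist (g (n+n0)) x < e" using n0 by simp
      then show ?thesis using eR gT[of "n+n0"] z(2)[of "n+n0"] unfolding z'_def by blast
    qed
    then have "bounded (range z')" by (auto intro!: boundedI)
    then obtain l r where r: "strict_mono r" and zl: "(z' \<circ> r) \<longlonglongrightarrow> l"
      using bounded_imp_convergent_subsequence by blast
    have g'l: "(g' \<circ> r) \<longlonglongrightarrow> x"
      using LIMSEQ_subseq_LIMSEQ[OF LIMSEQ_ignore_initial_segment[OF gx, of n0] r]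
      unfolding g'_def comp_def by simp
    have "((\<lambda>n. (g' (r n), z' (r n))) \<longlonglongrightarrow> (x, l))"
      using g'l zl unfolding comp_def by (intro tendsto_Pair) auto
    moreover have "(x, l) \<in> T \<times> UNIV" using xT by simp
    moreover have "\<forall>\<^sub>F n in sequentially. (g' (r n), z' (r n)) \<in> T \<times> UNIV"
      using gT unfolding g'_def by simp
    ultimately have lim1: "((\<lambda>n. (\<lambda>(u,s). f u s) (g' (r n), z' (r n))) \<longlonglongrightarrow> (\<lambda>(u,s). f u s) (x, l))"
      by (intro continuous_on_tendsto_compose[OF cont])
    have "(\<lambda>n. (\<lambda>(u,s). f u s) (g' (r n), z' (r n))) = (\<lambda>n. 0)"
      using z unfolding g'_def z'_def by simp
    with lim1 have "(\<lambda>n. 0::complex) \<longlonglongrightarrow> f x l" by simp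
    then have fl: "f x l = 0"
      using LIMSEQ_unique[OF tendsto_const] by metis
    have "\<forall>n. (z' \<circ> r) n \<in> Om \<inter> W"
    proof
      fix n show "(z' \<circ> r) n \<in> Om \<inter> W" using z(1) zW[OF gT z(2)] unfolding z'_def comp_def by blast
    qed
    then have "l \<in> closure (Om \<inter> W)" using zl closure_sequential by blast
    then have "l \<in> Om" using bd[OF xT _ _] fl by metis
    then show "x \<in> Z" using xT fl Z_def by blast
  qed
  have c2: "closedin (top_of_set T) (T - Z)"
    unfolding closedin_limpt
  proof (intro conjI allI impI)
    show "T - Z \<subseteq> T" by auto
    fix x assume "x islimpt (T - Z) \<and> x \<in> T"
    then have xl: "x islimpt (T - Z)" and xT: "x \<in> T" by auto
    obtain g where g: "\<And>n. g n \<in> (T - Z) - {x}" and gx: "g \<longlonglongrightarrow> x"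
      using xl[unfolded islimpt_sequential] by blast
    have gT: "g n \<in> T" for n using g by auto
    have "f x w \<noteq> 0" if wO: "w \<in> Om" for w
    proof (rule Hurwitz_no_zeros[OF Om, of "\<lambda>n. f (g n)" "f x" w])
      show "f (g n) holomorphic_on Om" for n using hol gT by blast
      show "f x holomorphic_on Om" using hol xT by blast
      show "uniform_limit K (\<lambda>n. f (g n)) (f x) sequentially" if "compact K" "K \<subseteq> Om" for K
        using unif_lim_joint[OF cont gT gx xT that(1)] .
      show "\<not> f x constant_on Om" using nc xT by blast
      show "f (g n) z \<noteq> 0" if "z \<in> Om" for n z using g that unfolding Z_def by auto
    qed (rule wO)
    then show "x \<in> T - Z" using Z_def xT by auto
  qed
  have ZT: "Z \<subseteq> T" by (auto simp: Z_def)
  have "openin (top_of_set T) T" by simp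
  then have "openin (top_of_set T) (T - (T - Z))"
    using c2 by (rule openin_diff)
  moreover have "T - (T - Z) = Z" using ZT by blast
  ultimately have "openin (top_of_set T) Z" by simp
  then have "Z = {} \<or> Z = T" using conT c1 connected_clopen by blast
  moreover have "u0 \<notin> Z" using z0 Z_def by auto
  ultimately have "Z = {}" using u0 by blast
  then show ?thesis using uT sO Z_def by auto
qed

lemma Sym2_iff: "A \<in> Sym2 \<longleftrightarrow> (\<forall>i j. A $ i $ j = A $ j $ i)"
  unfolding Sym2_def transpose_def by (auto simp: vec_eq_iff)

lemma Sym2_add: "A \<in> Sym2 \<Longrightarrow> B \<in> Sym2 \<Longrightarrow> A + B \<in> Sym2"
  by (simp add: Sym2_iff)
lemma Sym2_scale: "A \<in> Sym2 \<Longrightarrow> t *\<^sub>R A \<in> Sym2"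
  by (simp add: Sym2_iff)
lemma Sym2_minus: "A \<in> Sym2 \<Longrightarrow> - A \<in> Sym2"
  by (simp add: Sym2_iff)
lemma Sym2_diff: "A \<in> Sym2 \<Longrightarrow> B \<in> Sym2 \<Longrightarrow> A - B \<in> Sym2"
  by (simp add: Sym2_iff)
lemma Sym2_mat: "mat k \<in> Sym2"
  by (simp add: Sym2_def)
lemma Sym2_zero: "0 \<in> Sym2"
  by (simp add: Sym2_iff)

lemma poly_rep_lemma:
  fixes k :: "('p \<Rightarrow> nat) \<Rightarrow> 'c::comm_ring_1" and a b :: "'p \<Rightarrow> 'c"
  shows "(\<Sum>\<alpha>\<in>Al. k \<alpha> * (\<Prod>p\<in>P. (a p + z * b p) ^ \<alpha> p)) =
     poly (\<Sum>\<alpha>\<in>Al. smult (k \<alpha>) (\<Prod>p\<in>P. [:a p, b p:] ^ \<alpha> p)) z"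
  by (simp add: poly_sum poly_prod algebra_simps)

lemma poly_map_of_real: "poly (map_poly of_real p) (of_real x) = (of_real (poly p x) :: 'a::{real_algebra_1,comm_semiring_0})"
  by (induction p) (auto simp: map_poly_pCons)

lemma poly_eq_on_reals:
  fixes Q1 Q2 :: "complex poly"
  assumes "\<And>t::real. poly Q1 (of_real t) = poly Q2 (of_real t)"
  shows "Q1 = Q2"
proof (rule ccontr)
  assume "Q1 \<noteq> Q2"
  then have "Q1 - Q2 \<noteq> 0" by simp
  then have "finite {x. poly (Q1 - Q2) x = 0}" by (rule poly_roots_finite)
  moreover have "range (of_real :: real \<Rightarrow> complex) \<subseteq> {x. poly (Q1 - Q2) x = 0}"
    using assms by auto
  moreover have "infinite (range (of_real :: real \<Rightarrow> complex))"
    using inj_of_real infinite_UNIV_char_0 finite_imageD by blast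
  ultimately show False using finite_subset by blast
qed

locale GDloc =
  fixes F :: "real^'n^'n \<Rightarrow> real" and N :: nat and c :: "('n \<times> 'n \<Rightarrow> nat) \<Rightarrow> real"
  assumes rep: "\<And>A. A \<in> Sym2 \<Longrightarrow> F A = (\<Sum>\<alpha>\<in>{\<alpha>. (\<Sum>p\<in>UNIV. \<alpha> p) = N}.
                          c \<alpha> * (\<Prod>p\<in>UNIV. (A $ fst p $ snd p) ^ \<alpha> p))"
    and FI: "F (mat 1) > 0"
    and rr: "\<And>A. A \<in> Sym2 \<Longrightarrow> real_rooted_along_I F A"
    and N1: "N \<ge> 1"
begin

definition "Al = {\<alpha>::'n \<times> 'n \<Rightarrow> nat. (\<Sum>p\<in>UNIV. \<alpha> p) = N}"

definition FC :: "('n \<times> 'n \<Rightarrow> complex) \<Rightarrow> complex" where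
  "FC M = (\<Sum>\<alpha>\<in>Al. of_real (c \<alpha>) * (\<Prod>p\<in>UNIV. M p ^ \<alpha> p))"

definition em :: "real^'n^'n \<Rightarrow> 'n \<times> 'n \<Rightarrow> complex" where
  "em X p = of_real (X $ fst p $ snd p)"

definition lin :: "real^'n^'n \<Rightarrow> complex \<Rightarrow> real^'n^'n \<Rightarrow> 'n \<times> 'n \<Rightarrow> complex" where
  "lin X z Y p = em X p + z * em Y p"

lemma FC_real: "X \<in> Sym2 \<Longrightarrow> FC (em X) = of_real (F X)"
  unfolding FC_def em_def rep Al_def by simp

lemma FC_homog: "FC (\<lambda>p. z * M p) = z ^ N * FC M"
proof -
  have "(\<Prod>p\<in>UNIV. (z * M p) ^ \<alpha> p) = z ^ N * (\<Prod>p\<in>UNIV. M p ^ \<alpha> p)" if "\<alpha> \<in> Al" for \<alpha>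
  proof -
    have "(\<Prod>p\<in>UNIV. (z * M p) ^ \<alpha> p) = (\<Prod>p\<in>UNIV. z ^ \<alpha> p) * (\<Prod>p\<in>UNIV. M p ^ \<alpha> p)"
      by (simp add: power_mult_distrib prod.distrib)
    also have "(\<Prod>p\<in>UNIV. z ^ \<alpha> p) = z ^ (\<Sum>p\<in>UNIV. \<alpha> p)" by (rule power_sum[symmetric])
    also have "\<dots> = z ^ N" using that by (simp add: Al_def)
    finally show ?thesis .
  qed
  then show ?thesis unfolding FC_def by (simp add: sum_distrib_left algebra_simps)
qed

lemma FC_cont:
  assumes "\<And>p. continuous_on D (\<lambda>v. E v p)"
  shows "continuous_on D (\<lambda>v. FC (E v))"
  unfolding FC_def by (intro continuous_intros assms)

lemma FC_hol:
  assumes "\<And>p. (\<lambda>v. E v p) holomorphic_on D"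
  shows "(\<lambda>v. FC (E v)) holomorphic_on D"
  unfolding FC_def by (intro holomorphic_intros assms)

lemma FC_poly: "\<exists>Q. \<forall>z. FC (\<lambda>p. a p + z * b p) = poly Q z"
  unfolding FC_def by (intro exI allI) (rule poly_rep_lemma)

lemma F_poly: "X \<in> Sym2 \<Longrightarrow> Y \<in> Sym2 \<Longrightarrow> \<exists>q. \<forall>t. F (X + t *\<^sub>R Y) = poly q t"
proof -
  assume X: "X \<in> Sym2" and Y: "Y \<in> Sym2"
  have "F (X + t *\<^sub>R Y) = (\<Sum>\<alpha>\<in>Al. c \<alpha> * (\<Prod>p\<in>UNIV. (X $ fst p $ snd p + t * Y $ fst p $ snd p) ^ \<alpha> p))" for t
    using rep[OF Sym2_add[OF X Sym2_scale[OF Y]]] by (simp add: Al_def)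
  then have "\<forall>t. F (X + t *\<^sub>R Y) = poly (\<Sum>\<alpha>\<in>Al. smult (c \<alpha>) (\<Prod>p\<in>UNIV. [:X $ fst p $ snd p, Y $ fst p $ snd p:] ^ \<alpha> p)) t"
    by (simp add: poly_rep_lemma)
  then show ?thesis by blast
qed

lemma em_lin: "em (X + t *\<^sub>R Y) = lin X (of_real t) Y"
  by (auto simp: em_def lin_def fun_eq_iff)

lemma lin_eq: "lin X z Y = (\<lambda>p. em X p + z * em Y p)"
  by (auto simp: lin_def fun_eq_iff)

lemma F_homog: "A \<in> Sym2 \<Longrightarrow> F (t *\<^sub>R A) = t ^ N * F A"
proof -
  assume A: "A \<in> Sym2"
  have "of_real (F (t *\<^sub>R A)) = FC (em (t *\<^sub>R A))" using FC_real[OF Sym2_scale[OF A]] by simp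
  also have "em (t *\<^sub>R A) = (\<lambda>p. of_real t * em A p)" by (auto simp: em_def)
  also have "FC \<dots> = of_real t ^ N * FC (em A)" by (rule FC_homog)
  finally have "(of_real (F (t *\<^sub>R A)) :: complex) = of_real (t ^ N * F A)" using FC_real[OF A] by simp
  then show ?thesis by (rule of_real_eq_iff[THEN iffD1])
qed

definition hypd :: "real^'n^'n \<Rightarrow> bool" where
  "hypd e \<longleftrightarrow> e \<in> Sym2 \<and> F e > 0 \<and> (\<forall>X\<in>Sym2. \<forall>z. FC (lin X z e) = 0 \<longrightarrow> Im z = 0)"

definition Ce :: "real^'n^'n \<Rightarrow> (real^'n^'n) set" where
  "Ce e = {y \<in> Sym2. \<forall>t\<ge>0. F (t *\<^sub>R e + y) \<noteq> 0}"

lemma FC_lin_poly_real: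
  assumes X: "X \<in> Sym2" and Y: "Y \<in> Sym2" and q: "\<And>t. poly q t = F (X + t *\<^sub>R Y)"
  shows "FC (lin X z Y) = poly (map_poly of_real q) z"
proof -
  obtain Q where Q: "\<And>z. FC (\<lambda>p. em X p + z * em Y p) = poly Q z" using FC_poly by blast
  have "Q = map_poly of_real q"
  proof (rule poly_eq_on_reals)
    fix t :: real
    have "poly Q (of_real t) = FC (em (X + t *\<^sub>R Y))" using Q[of "of_real t"] by (simp add: em_lin lin_eq)
    also have "\<dots> = of_real (F (X + t *\<^sub>R Y))" using FC_real Sym2_add[OF X Sym2_scale[OF Y]] by simp
    finally show "poly Q (of_real t) = poly (map_poly of_real q) (of_real t)" by (simp add: q poly_map_of_real)
  qed
  then show ?thesis using Q by (simp add: lin_eq)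
qed

lemma hypd_I: "hypd (mat 1)"
  unfolding hypd_def
proof (intro conjI ballI allI impI)
  show "mat 1 \<in> Sym2" by (rule Sym2_mat)
  show "F (mat 1) > 0" by (rule FI)
  fix X :: "real^'n^'n" and z assume X: "X \<in> Sym2" and z: "FC (lin X z (mat 1)) = 0"
  obtain p where p: "\<And>t. poly p t = F (t *\<^sub>R mat 1 + X)"
    and pr: "\<And>z. poly (map_poly complex_of_real p) z = 0 \<Longrightarrow> z \<in> \<real>"
    using rr[OF X] unfolding real_rooted_along_I_def by blast
  have "FC (lin X z (mat 1)) = poly (map_poly of_real p) z"
    by (rule FC_lin_poly_real[OF X Sym2_mat]) (simp add: p add.commute)
  then show "Im z = 0" using z pr by (metis complex_is_Real_iff)
qed

end

context GDloc begin

lemma F_line_cont: "X \<in> Sym2 \<Longrightarrow> Y \<in> Sym2 \<Longrightarrow> continuous_on S (\<lambda>t. F (X + t *\<^sub>R Y))"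
proof -
  assume "X \<in> Sym2" "Y \<in> Sym2"
  then obtain q where q: "\<And>t. F (X + t *\<^sub>R Y) = poly q t" using F_poly by blast
  show ?thesis unfolding q by (intro continuous_intros)
qed

lemma Ce_Sym2: "y \<in> Ce e \<Longrightarrow> y \<in> Sym2" by (simp add: Ce_def)
lemma Ce_nz: "y \<in> Ce e \<Longrightarrow> F y \<noteq> 0"
  unfolding Ce_def by (metis (mono_tags, lifting) add_0 mem_Collect_eq order_refl scaleR_zero_left)

lemma hypd_self: "hypd e \<Longrightarrow> e \<in> Ce e"
proof -
  assume h: "hypd e"
  then have e: "e \<in> Sym2" "F e > 0" by (auto simp: hypd_def)
  have "F (t *\<^sub>R e + e) \<noteq> 0" if "t \<ge> 0" for t
  proof -
    have "t *\<^sub>R e + e = (t + 1) *\<^sub>R e" by (simp add: algebra_simps)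
    then show ?thesis using F_homog[OF e(1)] e(2) that by simp
  qed
  then show ?thesis using e by (simp add: Ce_def)
qed

lemma Ce_seg:
  assumes h: "hypd e" and y: "y \<in> Ce e" and u: "0 \<le> u" "u \<le> 1"
  shows "(1 - u) *\<^sub>R e + u *\<^sub>R y \<in> Ce e"
proof -
  have e: "e \<in> Sym2" "F e > 0" using h by (auto simp: hypd_def)
  have ys: "y \<in> Sym2" using y by (simp add: Ce_def)
  have "F (t *\<^sub>R e + ((1 - u) *\<^sub>R e + u *\<^sub>R y)) \<noteq> 0" if t: "t \<ge> 0" for t
  proof (cases "u = 0")
    case True
    then have "t *\<^sub>R e + ((1 - u) *\<^sub>R e + u *\<^sub>R y) = (t + 1) *\<^sub>R e" by (simp add: algebra_simps)
    then show ?thesis using F_homog[OF e(1)] e(2) t by simp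
  next
    case False
    then have up: "u > 0" using u by simp
    define s where "s = (t + 1 - u) / u"
    have s0: "s \<ge> 0" using up u t by (simp add: s_def)
    have us: "u * s = t + 1 - u" using up by (simp add: s_def)
    have "t *\<^sub>R e + ((1 - u) *\<^sub>R e + u *\<^sub>R y) = (t + 1 - u) *\<^sub>R e + u *\<^sub>R y" by (simp add: algebra_simps)
    also have "\<dots> = (u * s) *\<^sub>R e + u *\<^sub>R y" using us by simp
    also have "\<dots> = u *\<^sub>R (s *\<^sub>R e + y)" by (simp add: scaleR_add_right)
    finally have "t *\<^sub>R e + ((1 - u) *\<^sub>R e + u *\<^sub>R y) = u *\<^sub>R (s *\<^sub>R e + y)" .
    moreover have "F (u *\<^sub>R (s *\<^sub>R e + y)) = u ^ N * F (s *\<^sub>R e + y)"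
      by (rule F_homog) (use e ys in \<open>simp add: Sym2_add Sym2_scale\<close>)
    moreover have "F (s *\<^sub>R e + y) \<noteq> 0" using y s0 by (simp add: Ce_def)
    ultimately show ?thesis using up by simp
  qed
  then show ?thesis using e ys by (simp add: Ce_def Sym2_add Sym2_scale)
qed

lemma Ce_starlike: "hypd e \<Longrightarrow> starlike (Ce e)"
  unfolding starlike_def
proof (intro bexI[of _ e] ballI)
  assume h: "hypd e"
  show "e \<in> Ce e" using hypd_self[OF h] .
  fix y assume y: "y \<in> Ce e"
  show "closed_segment e y \<subseteq> Ce e"
    unfolding closed_segment_def using Ce_seg[OF h y] by blast
qed

lemma Ce_connected: "hypd e \<Longrightarrow> connected (Ce e)"
  by (rule starlike_imp_connected[OF Ce_starlike])

lemma Ce_pos: assumes h: "hypd e" and y: "y \<in> Ce e" shows "F y > 0"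
proof (rule ccontr)
  assume "\<not> F y > 0"
  then have Fy: "F y \<le> 0" by simp
  have e: "e \<in> Sym2" "F e > 0" using h by (auto simp: hypd_def)
  have ys: "y \<in> Sym2" using y by (simp add: Ce_def)
  define g where "g u = F (e + u *\<^sub>R (y - e))" for u
  have g: "g u = F ((1 - u) *\<^sub>R e + u *\<^sub>R y)" for u
    unfolding g_def by (simp add: algebra_simps)
  have "continuous_on {0..1} g" unfolding g_def
    by (rule F_line_cont) (use e ys in \<open>auto simp: Sym2_diff\<close>)
  moreover have "g 1 \<le> 0" "0 \<le> g 0" using Fy e by (auto simp: g)
  ultimately obtain u where u: "0 \<le> u" "u \<le> 1" "g u = 0"
    using IVT2'[of g 1 0 0] by auto
  then show False using Ce_nz[OF Ce_seg[OF h y u(1,2)]] g by simp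
qed

lemma Ce_I_sub: assumes y: "y \<in> Ce (mat 1)" shows "y \<in> garding_cone F"
proof -
  have h: "hypd (mat 1)" by (rule hypd_I)
  have "closed_segment (mat 1) y \<subseteq> {A \<in> Sym2. F A \<noteq> 0}"
    unfolding closed_segment_def using Ce_seg[OF h y] Ce_nz Ce_Sym2 by blast
  then show ?thesis unfolding garding_cone_def
    by (intro CollectI connected_componentI[OF connected_segment]) auto
qed

lemma FC_cnj: "FC (\<lambda>p. cnj (M p)) = cnj (FC M)"
  unfolding FC_def by simp

end

lemma dist_pair_le: "dist (a, b) (c, d) \<le> dist a c + dist b d"
  unfolding dist_prod_def by (simp add: sqrt_sum_squares_le_sum)

context GDloc begin

lemma FC_scale_out:
  assumes "s \<noteq> 0"
  shows "FC (\<lambda>p. M p + s * em Y p) = s ^ N * FC (\<lambda>p. em Y p + (1 / s) * M p)"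
proof -
  have "(\<lambda>p. M p + s * em Y p) = (\<lambda>p. s * (em Y p + (1 / s) * M p))"
    using assms by (auto simp: fun_eq_iff field_simps)
  then show ?thesis by (simp add: FC_homog)
qed

lemma FC_nonconst:
  assumes Y: "Y \<in> Sym2" "F Y \<noteq> 0" and unb: "\<And>R. \<exists>s\<in>Om. norm s > R"
  shows "\<not> (\<lambda>s. FC (\<lambda>p. M p + s * em Y p)) constant_on Om"
proof
  assume "(\<lambda>s. FC (\<lambda>p. M p + s * em Y p)) constant_on Om"
  then obtain c where cc: "\<And>s. s \<in> Om \<Longrightarrow> FC (\<lambda>p. M p + s * em Y p) = c"
    unfolding constant_on_def by blast
  define \<phi> where "\<phi> w = FC (\<lambda>p. em Y p + w * M p)" for w
  define K where "K = norm (FC (em Y))"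
  have K: "K > 0" using Y FC_real by (simp add: K_def)
  have "continuous_on UNIV \<phi>" unfolding \<phi>_def by (intro FC_cont continuous_intros)
  then have "\<forall>x\<in>UNIV. \<forall>e>0. \<exists>d>0. \<forall>x'\<in>UNIV. dist x' x < d \<longrightarrow> dist (\<phi> x') (\<phi> x) < e"
    unfolding continuous_on_iff .
  then have h1: "\<forall>e>0. \<exists>d>0. \<forall>x'\<in>UNIV. dist x' 0 < d \<longrightarrow> dist (\<phi> x') (\<phi> 0) < e"
    by (rule bspec) simp
  have "\<exists>d>0. \<forall>x'\<in>UNIV. dist x' 0 < d \<longrightarrow> dist (\<phi> x') (\<phi> 0) < K / 2"
    using h1 half_gt_zero[OF K] by blast
  then obtain d where d: "d > 0" and dd: "\<And>w. dist w 0 < d \<Longrightarrow> dist (\<phi> w) (\<phi> 0) < K / 2"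
    by blast
  have \<phi>0: "\<phi> 0 = FC (em Y)" by (simp add: \<phi>_def)
  have big: "norm (\<phi> w) > K / 2" if "norm w < d" for w
  proof -
    have "norm (\<phi> w - \<phi> 0) < K / 2" using dd[of w] that by (simp add: dist_norm)
    moreover have "norm (\<phi> 0) \<le> norm (\<phi> w) + norm (\<phi> w - \<phi> 0)" using norm_triangle_ineq4[of "\<phi> w" "\<phi> w - \<phi> 0"] by simp
    moreover have "norm (\<phi> 0) = K" using \<phi>0 K_def by simp
    ultimately show ?thesis by linarith
  qed
  obtain s where sO: "s \<in> Om" and sR: "norm s > max (max 1 (1 / d)) (2 * (norm c + 1) / K)"
    using unb by blast
  have s1: "norm s > 1" and sd: "norm s > 1 / d" and sc: "norm s > 2 * (norm c + 1) / K" using sR by auto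
  have s0: "s \<noteq> 0" using s1 by auto
  have "norm (1 / s) < d" using sd d s0 by (simp add: norm_divide field_simps)
  then have b: "norm (\<phi> (1 / s)) > K / 2" by (rule big)
  have "norm c = norm (s ^ N * \<phi> (1 / s))" using cc[OF sO] FC_scale_out[OF s0] by (simp add: \<phi>_def)
  also have "\<dots> = norm s ^ N * norm (\<phi> (1 / s))" by (simp add: norm_mult norm_power)
  also have "\<dots> \<ge> norm s * (K / 2)"
  proof -
    have "norm s ^ N \<ge> norm s" using s1 N1 by (metis less_imp_le power_increasing power_one_right)
    moreover have "norm (\<phi> (1 / s)) \<ge> K / 2" using b by simp
    ultimately show ?thesis using K by (intro mult_mono) auto
  qed
  finally have "norm c \<ge> norm s * (K / 2)" .
  moreover have "norm s * (K / 2) > norm c + 1" using sc K by (simp add: field_simps)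
  ultimately show False by simp
qed

lemma FC_rootbound:
  fixes M :: "'a::metric_space \<Rightarrow> 'n \<times> 'n \<Rightarrow> complex"
  assumes Mc: "\<And>p. continuous_on T (\<lambda>u. M u p)" and Y: "Y \<in> Sym2" "F Y \<noteq> 0" and u: "u \<in> T"
  shows "\<exists>e>0. \<exists>R. \<forall>v\<in>T. dist v u < e \<longrightarrow> (\<forall>s. FC (\<lambda>p. M v p + s * em Y p) = 0 \<longrightarrow> norm s \<le> R)"
proof -
  define \<phi> where "\<phi> x = FC (\<lambda>p. em Y p + snd x * M (fst x) p)" for x :: "'a \<times> complex"
  have Mc': "continuous_on (T \<times> UNIV) (\<lambda>x. M (fst x) p)" for p
    by (rule continuous_on_compose2[OF Mc continuous_on_fst]) auto
  have "continuous_on (T \<times> UNIV) \<phi>" unfolding \<phi>_def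
    by (intro FC_cont continuous_intros Mc')
  moreover have uT: "(u, 0) \<in> T \<times> UNIV" using u by simp
  moreover have K: "norm (\<phi> (u, 0)) > 0" using Y FC_real by (simp add: \<phi>_def)
  ultimately have "\<exists>d>0. \<forall>x\<in>T \<times> UNIV. dist x (u, 0) < d \<longrightarrow> dist (\<phi> x) (\<phi> (u, 0)) < norm (\<phi> (u, 0))"
    unfolding continuous_on_iff by blast
  then obtain d where d: "d > 0" and
    dd: "\<And>x. x \<in> T \<times> UNIV \<Longrightarrow> dist x (u, 0) < d \<Longrightarrow> dist (\<phi> x) (\<phi> (u, 0)) < norm (\<phi> (u, 0))"
    by blast
  have H: "\<forall>v\<in>T. dist v u < d / 2 \<longrightarrow> (\<forall>s. FC (\<lambda>p. M v p + s * em Y p) = 0 \<longrightarrow> norm s \<le> 2 / d)"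
  proof (intro ballI impI allI)
    fix v s assume vT: "v \<in> T" and vu: "dist v u < d / 2" and z: "FC (\<lambda>p. M v p + s * em Y p) = 0"
    show "norm s \<le> 2 / d"
    proof (rule ccontr)
      assume "\<not> norm s \<le> 2 / d"
      then have sb: "norm s > 2 / d" by simp
      then have s0: "s \<noteq> 0" using d by (auto simp: not_le)
      have "norm (1 / s) < d / 2" using sb d s0 by (simp add: norm_divide field_simps)
      then have "dist (v, 1 / s) (u, 0) < d"
        using dist_pair_le[of v "1/s" u 0] vu by (simp add: dist_norm)
      then have "dist (\<phi> (v, 1 / s)) (\<phi> (u, 0)) < norm (\<phi> (u, 0))" using dd vT by simp
      then have "\<phi> (v, 1 / s) \<noteq> 0" by auto
      moreover have "FC (\<lambda>p. M v p + s * em Y p) = s ^ N * \<phi> (v, 1 / s)"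
        using FC_scale_out[OF s0] by (simp add: \<phi>_def)
      ultimately show False using z s0 by simp
    qed
  qed
  show ?thesis using H half_gt_zero[OF d] by blast
qed

lemma family_zero_free:
  fixes M :: "'a::heine_borel \<Rightarrow> 'n \<times> 'n \<Rightarrow> complex"
  assumes conT: "connected T" and u0: "u0 \<in> T" and Om: "open Om" "connected Om"
    and unb: "\<And>R. \<exists>s\<in>Om. norm s > R"
    and W: "closed W" and Mc: "\<And>p. continuous_on T (\<lambda>u. M u p)" and Y: "Y \<in> Sym2" "F Y \<noteq> 0"
    and zW: "\<And>u s. u \<in> T \<Longrightarrow> FC (\<lambda>p. M u p + s * em Y p) = 0 \<Longrightarrow> s \<in> W"
    and bd: "\<And>u s. u \<in> T \<Longrightarrow> s \<in> closure (Om \<inter> W) \<Longrightarrow> s \<notin> Om \<Longrightarrow> FC (\<lambda>p. M u p + s * em Y p) \<noteq> 0"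
    and z0: "\<And>s. s \<in> Om \<Longrightarrow> FC (\<lambda>p. M u0 p + s * em Y p) \<noteq> 0"
    and uT: "u \<in> T" and sO: "s \<in> Om"
  shows "FC (\<lambda>p. M u p + s * em Y p) \<noteq> 0"
proof (rule zero_free_connected[OF conT u0 Om W, of "\<lambda>u s. FC (\<lambda>p. M u p + s * em Y p)"])
  have Mc': "continuous_on (T \<times> UNIV) (\<lambda>x. M (fst x) p)" for p
    by (rule continuous_on_compose2[OF Mc continuous_on_fst]) auto
  have "continuous_on (T \<times> UNIV) (\<lambda>x. FC (\<lambda>p. M (fst x) p + snd x * em Y p))"
    by (intro FC_cont continuous_intros Mc')
  then show "continuous_on (T \<times> UNIV) (\<lambda>(u, s). FC (\<lambda>p. M u p + s * em Y p))"
    by (simp add: case_prod_beta)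
  show "(\<lambda>s. FC (\<lambda>p. M u p + s * em Y p)) holomorphic_on Om" for u
    by (intro FC_hol holomorphic_intros)
  show "\<not> (\<lambda>s. FC (\<lambda>p. M u p + s * em Y p)) constant_on Om" for u
    by (rule FC_nonconst[OF Y unb])
  show "\<exists>e>0. \<exists>R. \<forall>v\<in>T. dist v u < e \<longrightarrow> (\<forall>s. FC (\<lambda>p. M v p + s * em Y p) = 0 \<longrightarrow> norm s \<le> R)"
    if "u \<in> T" for u
    by (rule FC_rootbound[OF Mc Y that])
qed (use zW bd z0 uT sO in auto)

end

context GDloc begin

definition "Hp = {z::complex. Im z > 0}"
definition "Sl = - (\<real>\<^sub>\<le>\<^sub>0 :: complex set)"

lemma Hp_props: "open Hp" "connected Hp" "\<And>R. \<exists>s\<in>Hp. norm s > R"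
proof -
  show "open Hp" unfolding Hp_def by (rule open_halfspace_Im_gt)
  show "connected Hp" unfolding Hp_def by (rule convex_connected[OF convex_halfspace_Im_gt])
  fix R :: real
  have "\<i> * of_real (\<bar>R\<bar> + 1) \<in> Hp" by (simp add: Hp_def)
  moreover have "norm (\<i> * of_real (\<bar>R\<bar> + 1)) > R" by (simp add: norm_mult)
  ultimately show "\<exists>s\<in>Hp. norm s > R" by blast
qed

lemma Sl_eq: "Sl = - (complex_of_real ` {..0})"
  unfolding Sl_def by (auto simp: complex_nonpos_Reals_iff complex_eq_iff image_iff)

lemma Sl_props: "open Sl" "connected Sl" "\<And>R. \<exists>s\<in>Sl. norm s > R"
proof -
  show "open Sl" unfolding Sl_def by (simp add: open_Compl)
  show "connected Sl" unfolding Sl_eq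
    by (rule starlike_imp_connected[OF starlike_slotted_complex_plane_left])
  fix R :: real
  have "of_real (\<bar>R\<bar> + 1) \<in> Sl" by (simp add: Sl_def complex_nonpos_Reals_iff)
  moreover have "norm (of_real (\<bar>R\<bar> + 1) :: complex) > R" by simp
  ultimately show "\<exists>s\<in>Sl. norm s > R" by blast
qed

lemma Sl_mem: "s \<in> Sl \<longleftrightarrow> \<not> (Re s \<le> 0 \<and> Im s = 0)"
  by (simp add: Sl_def complex_nonpos_Reals_iff)

lemma Sl_bd: "s \<in> closure (Sl \<inter> \<real>) \<Longrightarrow> s \<notin> Sl \<Longrightarrow> s = 0"
proof -
  assume a: "s \<in> closure (Sl \<inter> \<real>)" "s \<notin> Sl"
  have "Sl \<inter> \<real> \<subseteq> {z. Re z \<ge> 0}" by (auto simp: Sl_mem complex_is_Real_iff)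
  then have "closure (Sl \<inter> \<real>) \<subseteq> {z. Re z \<ge> 0}"
    by (rule closure_minimal) (rule closed_halfspace_Re_ge)
  then have "Re s \<ge> 0" using a by auto
  then show "s = 0" using a(2) by (simp add: Sl_mem complex_eq_iff)
qed

lemma em_cont: "continuous_on T (\<lambda>u. em u p)"
  unfolding em_def by (intro continuous_intros)

lemma FC_em_line: "X \<in> Sym2 \<Longrightarrow> Y \<in> Sym2 \<Longrightarrow> FC (\<lambda>p. em X p + of_real t * em Y p) = of_real (F (X + t *\<^sub>R Y))"
  using FC_real[of "X + t *\<^sub>R Y"] by (simp add: em_lin lin_eq Sym2_add Sym2_scale)

lemma hypd_real: "hypd e \<Longrightarrow> X \<in> Sym2 \<Longrightarrow> FC (\<lambda>p. em X p + s * em e p) = 0 \<Longrightarrow> s \<in> \<real>"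
  unfolding hypd_def lin_eq by (auto simp: complex_is_Real_iff)

lemma cone_sub:
  assumes he: "hypd e" and he': "hypd e'" and e'e: "e' \<in> Ce e" and y: "y \<in> Ce e'"
  shows "y \<in> Ce e"
proof -
  have es: "e \<in> Sym2" "F e > 0" and e's: "e' \<in> Sym2" using he he' by (auto simp: hypd_def)
  have main: "FC (\<lambda>p. em y p + s * em e p) \<noteq> 0" if sS: "s \<in> Sl" for s
  proof (rule family_zero_free[of "Ce e'" e' Sl \<real> em e, OF Ce_connected[OF he'] hypd_self[OF he'] Sl_props(1,2) Sl_props(3)
        closed_complex_Reals em_cont es(1)])
    show "F e \<noteq> 0" using es by simp
    show "s \<in> \<real>" if "u \<in> Ce e'" "FC (\<lambda>p. em u p + s * em e p) = 0" for u s
      using hypd_real[OF he Ce_Sym2[OF that(1)] that(2)] .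
    show "FC (\<lambda>p. em u p + s * em e p) \<noteq> 0" if "u \<in> Ce e'" "s \<in> closure (Sl \<inter> \<real>)" "s \<notin> Sl" for u s
      using Sl_bd[OF that(2,3)] Ce_nz[OF that(1)] FC_real[OF Ce_Sym2[OF that(1)]] by simp
    show "FC (\<lambda>p. em e' p + s * em e p) \<noteq> 0" if "s \<in> Sl" for s
    proof
      assume z: "FC (\<lambda>p. em e' p + s * em e p) = 0"
      then have "s \<in> \<real>" by (rule hypd_real[OF he e's])
      then obtain r where r: "s = of_real r" by (auto elim: Reals_cases)
      then have "r > 0" using that by (auto simp: Sl_mem not_le)
      then have "F (r *\<^sub>R e + e') \<noteq> 0" using e'e by (simp add: Ce_def)
      moreover have "FC (\<lambda>p. em e' p + s * em e p) = of_real (F (e' + r *\<^sub>R e))"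
        unfolding r by (rule FC_em_line[OF e's es(1)])
      ultimately show False using z by (simp add: add.commute)
    qed
  qed (use y sS in auto)
  have ys: "y \<in> Sym2" using y by (simp add: Ce_def)
  have "F (t *\<^sub>R e + y) \<noteq> 0" if t: "t \<ge> 0" for t
  proof (cases "t = 0")
    case True then show ?thesis using Ce_nz[OF y] by simp
  next
    case False
    then have "of_real t \<in> Sl" using t by (simp add: Sl_mem)
    then have "FC (\<lambda>p. em y p + of_real t * em e p) \<noteq> 0" by (rule main)
    then show ?thesis using FC_em_line[OF ys es(1)] by (simp add: add.commute)
  qed
  then show ?thesis using ys by (simp add: Ce_def)
qed

lemma cone_I:
  assumes A: "A \<in> garding_cone F"
  shows "A \<in> Ce (mat 1)"
proof -
  let ?S = "{A \<in> Sym2. F A \<noteq> 0}"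
  have sub: "garding_cone F \<subseteq> ?S" unfolding garding_cone_def by (rule connected_component_subset)
  have I: "mat 1 \<in> garding_cone F" unfolding garding_cone_def
    using FI Sym2_mat by (intro CollectI connected_component_refl) auto
  have he: "hypd (mat 1)" by (rule hypd_I)
  have main: "FC (\<lambda>p. em A p + s * em (mat 1) p) \<noteq> 0" if sS: "s \<in> Sl" for s
  proof (rule family_zero_free[of "garding_cone F" "mat 1" Sl \<real> em "mat 1", OF _ I Sl_props(1,2) Sl_props(3)
        closed_complex_Reals em_cont Sym2_mat])
    show "connected (garding_cone F)" unfolding garding_cone_def by simp
    show "F (mat 1) \<noteq> 0" using FI by simp
    show "s \<in> \<real>" if "u \<in> garding_cone F" "FC (\<lambda>p. em u p + s * em (mat 1) p) = 0" for u s
      using hypd_real[OF he _ that(2)] sub that(1) by auto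
    show "FC (\<lambda>p. em u p + s * em (mat 1) p) \<noteq> 0"
      if "u \<in> garding_cone F" "s \<in> closure (Sl \<inter> \<real>)" "s \<notin> Sl" for u s
      using Sl_bd[OF that(2,3)] sub that(1) FC_real[of u] by auto
    show "FC (\<lambda>p. em (mat 1) p + s * em (mat 1) p) \<noteq> 0" if "s \<in> Sl" for s
    proof -
      have "(\<lambda>p. em (mat 1) p + s * em (mat 1) p) = (\<lambda>p. (1 + s) * em (mat 1) p)"
        by (auto simp: fun_eq_iff algebra_simps)
      then have "FC (\<lambda>p. em (mat 1) p + s * em (mat 1) p) = (1 + s) ^ N * of_real (F (mat 1))"
        by (simp add: FC_homog FC_real[OF Sym2_mat])
      moreover have "1 + s \<noteq> 0" using that by (auto simp: Sl_mem complex_eq_iff)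
      ultimately show ?thesis using FI by simp
    qed
  qed (use A sS in auto)
  have As: "A \<in> Sym2" using A sub by auto
  have "F (t *\<^sub>R mat 1 + A) \<noteq> 0" if t: "t \<ge> 0" for t
  proof (cases "t = 0")
    case True then show ?thesis using A sub by auto
  next
    case False
    then have "of_real t \<in> Sl" using t by (simp add: Sl_mem)
    then have "FC (\<lambda>p. em A p + of_real t * em (mat 1) p) \<noteq> 0" by (rule main)
    then show ?thesis using FC_em_line[OF As Sym2_mat] by (simp add: add.commute)
  qed
  then show ?thesis using As by (simp add: Ce_def)
qed

end

context GDloc begin

lemma em_scale: "em (a *\<^sub>R X) p = of_real a * em X p"
  by (simp add: em_def)
lemma em_add: "em (X + Y) p = em X p + em Y p"
  by (simp add: em_def)

lemma transfer:
  assumes he: "hypd e" and y: "y \<in> Ce e"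
  shows "hypd y"
proof -
  have es: "e \<in> Sym2" "F e > 0" using he by (auto simp: hypd_def)
  have ys: "y \<in> Sym2" using y by (rule Ce_Sym2)
  have Fy: "F y \<noteq> 0" using y by (rule Ce_nz)
  have hinz: "FC (lin Z \<i> e) \<noteq> 0" if "Z \<in> Sym2" for Z
  proof
    assume "FC (lin Z \<i> e) = 0"
    then have "Im \<i> = 0" using he that unfolding hypd_def by blast
    then show False by simp
  qed
  have step1: "FC (\<lambda>p. (of_real \<beta> * em X p + \<i> * em e p) + t * em y p) \<noteq> 0"
    if X: "X \<in> Sym2" and b: "\<beta> \<in> {0..1}" and t: "t \<in> Hp" for X \<beta> t
  proof (rule family_zero_free[of "{0..1::real}" 0 Hp UNIV "\<lambda>\<beta> p. of_real \<beta> * em X p + \<i> * em e p" y,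
        OF connected_Icc _ Hp_props(1,2) Hp_props(3) closed_UNIV _ ys Fy])
    show "continuous_on {0..1} (\<lambda>\<beta>. of_real \<beta> * em X p + \<i> * em e p)" for p
      by (intro continuous_intros)
    show "FC (\<lambda>p. of_real u * em X p + \<i> * em e p + s * em y p) \<noteq> 0"
      if "u \<in> {0..1}" "s \<in> closure (Hp \<inter> UNIV)" "s \<notin> Hp" for u s
    proof -
      have "closure Hp \<subseteq> {z. Im z \<ge> 0}" unfolding Hp_def
        by (rule closure_minimal) (auto intro: closed_halfspace_Im_ge)
      then have "Im s = 0" using that by (auto simp: Hp_def)
      then have sr: "s = of_real (Re s)" by (simp add: complex_eq_iff)
      have "(\<lambda>p. of_real u * em X p + \<i> * em e p + s * em y p) = lin (u *\<^sub>R X + Re s *\<^sub>R y) \<i> e"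
        by (subst sr) (auto simp: lin_eq fun_eq_iff em_add em_scale algebra_simps)
      then show ?thesis using hinz[of "u *\<^sub>R X + Re s *\<^sub>R y"] X ys by (simp add: Sym2_add Sym2_scale)
    qed
    show "FC (\<lambda>p. of_real 0 * em X p + \<i> * em e p + s * em y p) \<noteq> 0" if sH: "s \<in> Hp" for s
    proof
      assume z: "FC (\<lambda>p. of_real 0 * em X p + \<i> * em e p + s * em y p) = 0"
      have s0: "s \<noteq> 0" using sH by (auto simp: Hp_def)
      have "FC (\<lambda>p. \<i> * em e p + s * em y p) = s ^ N * FC (\<lambda>p. em y p + (1 / s) * (\<i> * em e p))"
        by (rule FC_scale_out[OF s0])
      then have "FC (\<lambda>p. em y p + (\<i> / s) * em e p) = 0" using z s0 by simp
      then have "\<i> / s \<in> \<real>" by (rule hypd_real[OF he ys])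
      then obtain r where r: "\<i> / s = of_real r" by (auto elim: Reals_cases)
      have r0: "r \<noteq> 0" using r s0 by auto
      show False
      proof (cases "r > 0")
        case True
        have "F (r *\<^sub>R e + y) \<noteq> 0" using y True by (simp add: Ce_def)
        moreover have "FC (\<lambda>p. em y p + of_real r * em e p) = of_real (F (y + r *\<^sub>R e))"
          by (rule FC_em_line[OF ys es(1)])
        ultimately show False using \<open>FC (\<lambda>p. em y p + (\<i> / s) * em e p) = 0\<close> r by (simp add: add.commute)
      next
        case False
        then have rn: "r < 0" using r0 by simp
        have "s = \<i> / of_real r" using r s0 r0 by (auto simp: field_simps)
        then have "Im s = 1 / r" by simp
        then show False using sH rn by (simp add: Hp_def)
      qed
    qed
  qed (use b t in auto)
  have step2: "FC (\<lambda>p. em X p + (\<i> * of_real a) * em e p + t * em y p) \<noteq> 0"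
    if X: "X \<in> Sym2" and a: "a > 0" and t: "t \<in> Hp" for X a t
  proof -
    have tH: "t / of_real a \<in> Hp" using t a by (simp add: Hp_def)
    have "(\<lambda>p. em X p + (\<i> * of_real a) * em e p + t * em y p) =
          (\<lambda>p. of_real a * (of_real 1 * em ((1 / a) *\<^sub>R X) p + \<i> * em e p + (t / of_real a) * em y p))"
      using a by (auto simp: fun_eq_iff em_scale field_simps)
    then have "FC (\<lambda>p. em X p + (\<i> * of_real a) * em e p + t * em y p) =
      of_real a ^ N * FC (\<lambda>p. of_real 1 * em ((1 / a) *\<^sub>R X) p + \<i> * em e p + (t / of_real a) * em y p)"
      by (simp add: FC_homog)
    moreover have "FC (\<lambda>p. of_real 1 * em ((1 / a) *\<^sub>R X) p + \<i> * em e p + (t / of_real a) * em y p) \<noteq> 0"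
      by (rule step1[OF Sym2_scale[OF X] _ tH]) simp
    ultimately show ?thesis using a by simp
  qed
  have step3: "FC (\<lambda>p. em X p + z * em y p) \<noteq> 0" if X: "X \<in> Sym2" and z: "z \<in> Hp" for X z
  proof -
    define f where "f a t = FC (\<lambda>p. em X p + (\<i> * of_real a) * em e p + t * em y p)" for a :: real and t
    define g where "g k = 1 / (real k + 1)" for k :: nat
    have "g = (\<lambda>n. inverse (real (Suc n)))" unfolding g_def by (simp add: fun_eq_iff inverse_eq_divide)
    then have gl: "g \<longlonglongrightarrow> 0" using LIMSEQ_inverse_real_of_nat by simp
    have cont: "continuous_on (UNIV \<times> UNIV) (\<lambda>(a, t). f a t)"
    proof -
      have "continuous_on (UNIV \<times> UNIV) (\<lambda>x. FC (\<lambda>p. em X p + (\<i> * of_real (fst x)) * em e p + snd x * em y p))"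
        by (intro FC_cont continuous_intros)
      then show ?thesis by (simp add: f_def case_prod_beta)
    qed
    have "f 0 z \<noteq> 0"
    proof (rule Hurwitz_no_zeros[OF Hp_props(1,2), of "\<lambda>k. f (g k)" "f 0" z])
      show "f (g k) holomorphic_on Hp" for k unfolding f_def by (intro FC_hol holomorphic_intros)
      show "f 0 holomorphic_on Hp" unfolding f_def by (intro FC_hol holomorphic_intros)
      show "uniform_limit K (\<lambda>k. f (g k)) (f 0) sequentially" if "compact K" "K \<subseteq> Hp" for K
        by (rule unif_lim_joint[OF cont _ gl _ that(1)]) auto
      show "\<not> f 0 constant_on Hp" unfolding f_def
        by (rule FC_nonconst[OF ys Fy Hp_props(3)])
      show "f (g k) t \<noteq> 0" if "t \<in> Hp" for k t
        unfolding f_def by (rule step2[OF X _ that]) (simp add: g_def)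
    qed (rule z)
    then show ?thesis by (simp add: f_def)
  qed
  have "Im z = 0" if X: "X \<in> Sym2" and z: "FC (lin X z y) = 0" for X z
  proof (rule ccontr)
    assume "Im z \<noteq> 0"
    then consider "Im z > 0" | "Im z < 0" by linarith
    then show False
    proof cases
      case 1 then show False using step3[OF X, of z] z by (simp add: Hp_def lin_eq)
    next
      case 2
      have "(\<lambda>p. cnj (em X p + z * em y p)) = (\<lambda>p. em X p + cnj z * em y p)"
        by (auto simp: fun_eq_iff em_def)
      then have "FC (\<lambda>p. em X p + cnj z * em y p) = cnj (FC (lin X z y))"
        using FC_cnj[of "\<lambda>p. em X p + z * em y p"] by (simp add: lin_eq)
      then show False using step3[OF X, of "cnj z"] z 2 by (simp add: Hp_def)
    qed
  qed
  then show ?thesis unfolding hypd_def using ys Ce_pos[OF he y] by blast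
qed

end

lemma map_poly_linear_mult:
  fixes q :: "real poly"
  shows "map_poly (of_real :: real \<Rightarrow> complex) ([:-r, 1:] * q) = [:- of_real r, 1:] * map_poly of_real q"
  by (rule poly_eq_on_reals) (simp add: poly_map_of_real)

lemma realroot_deriv_aux:
  fixes q :: "real poly"
  assumes "degree q = n"
    and "\<forall>z. poly (map_poly of_real q) z = (0::complex) \<longrightarrow> z \<in> \<real> \<and> Re z < 0" and "poly q 0 > 0"
  shows "poly (pderiv q) 0 \<ge> 0 \<and> (degree q > 0 \<longrightarrow> poly (pderiv q) 0 > 0)"
  using assms
proof (induction n arbitrary: q)
  case 0
  then have "pderiv q = 0" by (simp add: pderiv_eq_0_iff)
  then show ?case using 0 by simp
next
  case (Suc n)
  have dm: "degree (map_poly (of_real :: real \<Rightarrow> complex) q) = Suc n"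
    using Suc.prems(1) by (simp add: degree_map_poly)
  then have "\<not> constant (poly (map_poly (of_real :: real \<Rightarrow> complex) q))"
    by (simp add: constant_degree)
  then obtain z :: complex where z: "poly (map_poly of_real q) z = 0"
    using fundamental_theorem_of_algebra by blast
  then have zr: "z \<in> \<real>" "Re z < 0" using Suc.prems(2) by auto
  then obtain r where r: "z = of_real r" by (auto elim: Reals_cases)
  have rn: "r < 0" using zr r by simp
  have "(of_real (poly q r) :: complex) = 0" using z r by (simp add: poly_map_of_real)
  then have "poly q r = 0" by simp
  then obtain q' where q': "q = [:-r, 1:] * q'" using poly_eq_0_iff_dvd by (metis dvdE)
  have q'0: "q' \<noteq> 0" using q' Suc.prems(1) by auto
  have "degree q = degree [:-r, 1:] + degree q'" unfolding q' by (rule degree_mult_eq) (use q'0 in auto)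
  then have dq': "degree q' = n" using Suc.prems(1) by simp
  have roots': "\<forall>z. poly (map_poly of_real q') z = (0::complex) \<longrightarrow> z \<in> \<real> \<and> Re z < 0"
  proof (intro allI impI)
    fix w :: complex assume "poly (map_poly of_real q') w = 0"
    then have "poly (map_poly of_real q) w = 0" unfolding q' map_poly_linear_mult by simp
    then show "w \<in> \<real> \<and> Re w < 0" using Suc.prems(2) by blast
  qed
  have "poly q 0 = - r * poly q' 0" unfolding q' by simp
  then have "r * poly q' 0 < 0" using Suc.prems(3) by simp
  then have q'pos: "poly q' 0 > 0" using rn by (simp add: mult_less_0_iff)
  have IH: "poly (pderiv q') 0 \<ge> 0" using Suc.IH[OF dq' roots' q'pos] by simp
  have d1: "pderiv [:-r, 1::real:] = 1" by (simp add: pderiv_pCons)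
  have "pderiv q = [:-r, 1:] * pderiv q' + q' * pderiv [:-r, 1:]" unfolding q' by (rule pderiv_mult)
  then have "poly (pderiv q) 0 = poly [:-r, 1:] 0 * poly (pderiv q') 0 + poly q' 0" by (simp only: d1 poly_add poly_mult) simp
  then have "poly (pderiv q) 0 = - r * poly (pderiv q') 0 + poly q' 0" by simp
  moreover have "- r * poly (pderiv q') 0 \<ge> 0" using rn IH by (simp add: mult_nonpos_nonneg)
  ultimately show ?case using q'pos by simp
qed

context GDloc begin

lemma Ce_swap: "hypd e \<Longrightarrow> hypd e' \<Longrightarrow> e' \<in> Ce e \<Longrightarrow> e \<in> Ce e'"
proof -
  assume he: "hypd e" and he': "hypd e'" and e'e: "e' \<in> Ce e"
  have es: "e \<in> Sym2" "F e > 0" and e's: "e' \<in> Sym2" using he he' by (auto simp: hypd_def)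
  have "F (t *\<^sub>R e' + e) \<noteq> 0" if t: "t \<ge> 0" for t
  proof (cases "t = 0")
    case True then show ?thesis using es by simp
  next
    case False
    then have tp: "t > 0" using t by simp
    have "t *\<^sub>R e' + e = t *\<^sub>R ((1 / t) *\<^sub>R e + e')" using tp by (simp add: scaleR_add_right)
    moreover have "F (t *\<^sub>R ((1 / t) *\<^sub>R e + e')) = t ^ N * F ((1 / t) *\<^sub>R e + e')"
      by (rule F_homog) (simp add: Sym2_add Sym2_scale es e's)
    moreover have "F ((1 / t) *\<^sub>R e + e') \<noteq> 0" using e'e tp by (simp add: Ce_def)
    ultimately show ?thesis using tp by simp
  qed
  then show ?thesis using es by (simp add: Ce_def)
qed

lemma Ce_shift: "y \<in> Ce e \<Longrightarrow> hypd e \<Longrightarrow> s \<ge> 0 \<Longrightarrow> s *\<^sub>R e + y \<in> Ce e"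
proof -
  assume y: "y \<in> Ce e" and he: "hypd e" and s: "s \<ge> 0"
  have "F (t *\<^sub>R e + (s *\<^sub>R e + y)) \<noteq> 0" if "t \<ge> 0" for t
  proof -
    have eq: "t *\<^sub>R e + (s *\<^sub>R e + y) = (t + s) *\<^sub>R e + y" by (simp add: algebra_simps)
    have "F ((t + s) *\<^sub>R e + y) \<noteq> 0" using y s that by (simp add: Ce_def)
    then show ?thesis unfolding eq .
  qed
  then show ?thesis using y he by (simp add: Ce_def hypd_def Sym2_add Sym2_scale)
qed

lemma Ce_add:
  assumes y1: "y1 \<in> Ce (mat 1)" and y2: "y2 \<in> Ce (mat 1)"
  shows "y1 + y2 \<in> Ce (mat 1)"
proof -
  have hI: "hypd (mat 1)" by (rule hypd_I)
  have "F (s *\<^sub>R mat 1 + (y1 + y2)) \<noteq> 0" if s: "s \<ge> 0" for s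
  proof -
    have z: "s *\<^sub>R mat 1 + y1 \<in> Ce (mat 1)" by (rule Ce_shift[OF y1 hI s])
    have hz: "hypd (s *\<^sub>R mat 1 + y1)" by (rule transfer[OF hI z])
    have "mat 1 \<in> Ce (s *\<^sub>R mat 1 + y1)" by (rule Ce_swap[OF hI hz z])
    then have "y2 \<in> Ce (s *\<^sub>R mat 1 + y1)" by (rule cone_sub[OF hz hI _ y2])
    then have "\<forall>t\<ge>0. F (t *\<^sub>R (s *\<^sub>R mat 1 + y1) + y2) \<noteq> 0" by (simp add: Ce_def)
    then have "F (1 *\<^sub>R (s *\<^sub>R mat 1 + y1) + y2) \<noteq> 0" by (rule allE[of _ 1]) simp
    then show ?thesis by (simp add: add.assoc)
  qed
  then show ?thesis using y1 y2 by (simp add: Ce_def Sym2_add)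
qed

lemma Ce_delta:
  assumes A: "A \<in> Ce (mat 1)"
  shows "\<exists>d>0. A - d *\<^sub>R mat 1 \<in> Ce (mat 1)"
proof -
  have As: "A \<in> Sym2" using A by (rule Ce_Sym2)
  obtain q where q: "\<And>t. F (A + t *\<^sub>R mat 1) = poly q t" using F_poly[OF As Sym2_mat] by blast
  have "q \<noteq> 0" using q[of 0] Ce_nz[OF A] by auto
  then have fin: "finite {x. poly q x = 0}" by (rule poly_roots_finite)
  have neg: "x < 0" if "poly q x = 0" for x
  proof (rule ccontr)
    assume "\<not> x < 0"
    then have "F (x *\<^sub>R mat 1 + A) \<noteq> 0" using A by (simp add: Ce_def)
    then show False using q[of x] that by (simp add: add.commute)
  qed
  define Z where "Z = {x. poly q x = 0}"
  define d where "d = (if Z = {} then 1 else - Max Z / 2)"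
  have dp: "d > 0"
  proof (cases "Z = {}")
    case False
    then have "Max Z \<in> Z" using fin Z_def by (intro Max_in) auto
    then show ?thesis using False neg by (simp add: d_def Z_def)
  qed (simp add: d_def)
  have "F (t *\<^sub>R mat 1 + (A - d *\<^sub>R mat 1)) \<noteq> 0" if t: "t \<ge> 0" for t
  proof
    assume "F (t *\<^sub>R mat 1 + (A - d *\<^sub>R mat 1)) = 0"
    moreover have "t *\<^sub>R mat 1 + (A - d *\<^sub>R mat 1) = A + (t - d) *\<^sub>R mat 1" by (simp add: algebra_simps)
    ultimately have "poly q (t - d) = 0" using q by simp
    then have tZ: "t - d \<in> Z" by (simp add: Z_def)
    then have ne: "Z \<noteq> {}" by auto
    have "t - d \<le> Max Z" using tZ fin Z_def by (intro Max_ge) auto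
    then show False using t ne dp by (simp add: d_def)
  qed
  then show ?thesis using dp As by (intro exI[of _ d]) (simp add: Ce_def Sym2_diff Sym2_scale Sym2_mat)
qed

end

lemma comp_has_derivative:
  "((\<lambda>M::real^'n^'n. M $ i $ j) has_derivative (\<lambda>M. M $ i $ j)) F"
  by (intro bounded_linear_imp_has_derivative bounded_linear_compose[OF bounded_linear_vec_nth bounded_linear_vec_nth])

definition Emat :: "'n \<Rightarrow> 'n \<Rightarrow> real^'n^'n" where
  "Emat i j = (\<chi> a b. if a = i \<and> b = j then 1 else 0)"

lemma mat_expand: "(B::real^'n^'n) = (\<Sum>i\<in>UNIV. \<Sum>j\<in>UNIV. B $ i $ j *\<^sub>R Emat i j)"
proof -
  have *: "(\<Sum>y\<in>UNIV. if a = x \<and> b = y then f y else 0) = (if a = x then f b else (0::real))" for a x b and f :: "'n \<Rightarrow> real"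
    by (cases "a = x") (simp_all add: sum.delta)
  have **: "(\<Sum>x\<in>UNIV. if a = x then f x else 0) = (f a :: real)" for a and f :: "'n \<Rightarrow> real"
    by (simp add: sum.delta)
  show ?thesis by (simp add: vec_eq_iff Emat_def if_distrib * ** cong: if_cong)
qed

lemma trace_mult_sym:
  fixes G B :: "real^'n^'n"
  assumes "B \<in> Sym2"
  shows "trace (G ** B) = (\<Sum>i\<in>UNIV. \<Sum>j\<in>UNIV. G $ i $ j * B $ i $ j)"
  using assms unfolding trace_def matrix_matrix_mult_def Sym2_iff by simp

lemma quad_trace:
  fixes G :: "real^'n^'n" and x :: "real^'n"
  shows "x \<bullet> (G *v x) = trace (G ** (\<chi> i j. x $ i * x $ j))"
  unfolding trace_def matrix_matrix_mult_def matrix_vector_mult_def inner_vec_def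
  by (simp add: sum_distrib_left algebra_simps)

context GDloc begin

lemma grad_exists:
  assumes A: "A \<in> Sym2"
  shows "\<exists>G. is_gradient F A G"
proof -
  define Pf where "Pf M = (\<Sum>\<alpha>\<in>Al. c \<alpha> * (\<Prod>p\<in>UNIV. (M $ fst p $ snd p) ^ \<alpha> p))" for M :: "real^'n^'n"
  have FPf: "F M = Pf M" if "M \<in> Sym2" for M using rep[OF that] by (simp add: Pf_def Al_def)
  have "\<exists>L. (Pf has_derivative L) (at A)"
    unfolding Pf_def
    apply (rule exI)
    apply (rule has_derivative_sum)
    apply (rule has_derivative_mult_right)
    apply (rule has_derivative_prod)
    apply (rule has_derivative_power)
    apply (rule comp_has_derivative)
    done
  then obtain L where L: "(Pf has_derivative L) (at A)" by blast
  have lin: "linear L" using L by (rule has_derivative_linear)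
  define H where "H = (\<chi> i j. L (Emat i j))"
  define G where "G = (\<chi> i j. (H $ i $ j + H $ j $ i) / 2)"
  have Gs: "G \<in> Sym2" by (simp add: Sym2_iff G_def)
  have LB: "L B = trace (G ** B)" if B: "B \<in> Sym2" for B
  proof -
    have "L B = L (\<Sum>i\<in>UNIV. \<Sum>j\<in>UNIV. B $ i $ j *\<^sub>R Emat i j)" by (subst mat_expand) simp
    also have "\<dots> = (\<Sum>i\<in>UNIV. \<Sum>j\<in>UNIV. B $ i $ j * H $ i $ j)"
      by (simp add: linear_sum[OF lin] linear_scale[OF lin] H_def)
    finally have 1: "L B = (\<Sum>i\<in>UNIV. \<Sum>j\<in>UNIV. B $ i $ j * H $ i $ j)" .
    have "(\<Sum>i\<in>UNIV. \<Sum>j\<in>UNIV. H $ j $ i * B $ i $ j) = (\<Sum>j\<in>UNIV. \<Sum>i\<in>UNIV. H $ j $ i * B $ i $ j)"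
      by (rule sum.swap)
    also have "\<dots> = (\<Sum>j\<in>UNIV. \<Sum>i\<in>UNIV. H $ j $ i * B $ j $ i)" using B by (simp add: Sym2_iff)
    finally have 2: "(\<Sum>i\<in>UNIV. \<Sum>j\<in>UNIV. H $ j $ i * B $ i $ j) = (\<Sum>i\<in>UNIV. \<Sum>j\<in>UNIV. H $ i $ j * B $ i $ j)" .
    have "trace (G ** B) = (\<Sum>i\<in>UNIV. \<Sum>j\<in>UNIV. (H $ i $ j * B $ i $ j + H $ j $ i * B $ i $ j) / 2)"
      unfolding trace_mult_sym[OF B] G_def by (simp add: algebra_simps add_divide_distrib)
    also have "\<dots> = ((\<Sum>i\<in>UNIV. \<Sum>j\<in>UNIV. H $ i $ j * B $ i $ j) + (\<Sum>i\<in>UNIV. \<Sum>j\<in>UNIV. H $ j $ i * B $ i $ j)) / 2"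
      by (simp add: sum.distrib flip: sum_divide_distrib)
    also have "\<dots> = L B" using 1 2 by (simp add: mult.commute)
    finally show ?thesis by simp
  qed
  have "((\<lambda>t. F (A + t *\<^sub>R B)) has_real_derivative trace (G ** B)) (at 0)" if B: "B \<in> Sym2" for B
  proof -
    have eq: "(\<lambda>t. F (A + t *\<^sub>R B)) = (\<lambda>t. Pf (A + t *\<^sub>R B))"
      using A B by (auto simp: FPf Sym2_add Sym2_scale)
    have d1: "((\<lambda>t::real. A + t *\<^sub>R B) has_derivative (\<lambda>t. t *\<^sub>R B)) (at 0)"
      by (intro derivative_eq_intros) auto
    have L': "(Pf has_derivative L) (at ((\<lambda>t::real. A + t *\<^sub>R B) 0))" using L by simp
    have "((\<lambda>t. Pf (A + t *\<^sub>R B)) has_derivative (\<lambda>t. L (t *\<^sub>R B))) (at 0)"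
      by (rule has_derivative_compose[OF d1 L'])
    moreover have "(\<lambda>t. L (t *\<^sub>R B)) = (*) (trace (G ** B))"
      using LB[OF B] by (auto simp: fun_eq_iff linear_scale[OF lin])
    ultimately show ?thesis unfolding eq has_field_derivative_def by simp
  qed
  then show ?thesis using Gs unfolding is_gradient_def by blast
qed

end

lemma inv_seq_lim: "(\<lambda>n. 1 / (real n + 1)) \<longlonglongrightarrow> 0"
proof -
  have "(\<lambda>n. 1 / (real n + 1)) = (\<lambda>n. inverse (real (Suc n)))" by (simp add: fun_eq_iff inverse_eq_divide)
  then show ?thesis using LIMSEQ_inverse_real_of_nat by simp
qed

context GDloc begin

lemma main_pos:
  assumes PD: "\<And>B. B \<in> Sym2 \<Longrightarrow> pos_def B \<Longrightarrow> B \<in> garding_cone F"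
    and cmpl: "{P\<in>Sym2. pos_semidef P} \<inter> edge F = {0}"
    and A: "A \<in> garding_cone F" and x: "x \<noteq> 0" and G: "is_gradient F A G"
  shows "x \<bullet> (G *v x) > 0"
proof -
  define P where "P = (\<chi> i j. x $ i * x $ j)"
  have Ps: "P \<in> Sym2" by (simp add: P_def Sym2_iff mult.commute)
  have Pv: "P *v y = (x \<bullet> y) *\<^sub>R x" for y
    by (simp add: P_def vec_eq_iff matrix_vector_mult_def inner_vec_def sum_distrib_left sum_distrib_right algebra_simps)
  have Psd: "y \<bullet> (P *v y) \<ge> 0" for y
    unfolding Pv by (simp add: inner_commute)
  obtain i where xi: "x $ i \<noteq> 0" using x by (auto simp: vec_eq_iff)
  have P0: "P \<noteq> 0"
  proof
    assume "P = 0"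
    then have "P $ i $ i = 0" by simp
    then show False using xi by (simp add: P_def)
  qed
  have pd: "s *\<^sub>R P + d *\<^sub>R mat 1 \<in> Ce (mat 1)" if s: "s \<ge> 0" and d: "d > 0" for s d
  proof -
    have "pos_def (s *\<^sub>R P + d *\<^sub>R mat 1)" unfolding pos_def_def
    proof (intro allI impI)
      fix y :: "real^'n" assume y: "y \<noteq> 0"
      have "(s *\<^sub>R P + d *\<^sub>R mat 1) *v y = s *\<^sub>R (P *v y) + d *\<^sub>R y"
        by (simp add: matrix_vector_mult_add_rdistrib scaleR_matrix_vector_assoc[symmetric])
      then have "y \<bullet> ((s *\<^sub>R P + d *\<^sub>R mat 1) *v y) = s * (y \<bullet> (P *v y)) + d * (y \<bullet> y)"
        by (simp add: inner_add_right)
      moreover have "y \<bullet> y > 0" using y by simp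
      moreover have "s * (y \<bullet> (P *v y)) \<ge> 0" using s Psd by simp
      ultimately show "y \<bullet> ((s *\<^sub>R P + d *\<^sub>R mat 1) *v y) > 0" using d by (simp add: add_nonneg_pos)
    qed
    moreover have "s *\<^sub>R P + d *\<^sub>R mat 1 \<in> Sym2" using Ps by (simp add: Sym2_add Sym2_scale Sym2_mat)
    ultimately show ?thesis using PD cone_I by blast
  qed
  have AC: "A \<in> Ce (mat 1)" by (rule cone_I[OF A])
  have As: "A \<in> Sym2" using AC by (rule Ce_Sym2)
  have hA: "hypd A" by (rule transfer[OF hypd_I AC])
  have FA: "F A > 0" by (rule Ce_pos[OF hypd_I AC])
  obtain d where d: "d > 0" "A - d *\<^sub>R mat 1 \<in> Ce (mat 1)" using Ce_delta[OF AC] by blast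
  have nz: "F (A + r *\<^sub>R P) \<noteq> 0" if r: "r \<ge> 0" for r
  proof -
    have "(A - d *\<^sub>R mat 1) + (r *\<^sub>R P + d *\<^sub>R mat 1) \<in> Ce (mat 1)"
      by (rule Ce_add[OF d(2) pd[OF r d(1)]])
    moreover have "(A - d *\<^sub>R mat 1) + (r *\<^sub>R P + d *\<^sub>R mat 1) = A + r *\<^sub>R P" by simp
    ultimately have "A + r *\<^sub>R P \<in> Ce (mat 1)" by simp
    then show ?thesis by (rule Ce_nz)
  qed
  obtain q where q: "\<And>t. F (A + t *\<^sub>R P) = poly q t" using F_poly[OF As Ps] by blast
  have roots: "\<forall>z. poly (map_poly of_real q) z = (0::complex) \<longrightarrow> z \<in> \<real> \<and> Re z < 0"
  proof (intro allI impI)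
    fix z :: complex assume z: "poly (map_poly of_real q) z = 0"
    have fz: "FC (lin A z P) = poly (map_poly of_real q) z"
      by (rule FC_lin_poly_real[OF As Ps]) (simp add: q)
    have z0: "z \<noteq> 0"
    proof
      assume "z = 0"
      then have "FC (lin A z P) = of_real (F A)" by (simp add: lin_eq FC_real[OF As, symmetric])
      then show False using z fz FA by simp
    qed
    have "FC (\<lambda>p. em A p + z * em P p) = z ^ N * FC (\<lambda>p. em P p + (1 / z) * em A p)"
      by (rule FC_scale_out[OF z0])
    then have "FC (\<lambda>p. em P p + (1 / z) * em A p) = 0" using z fz z0 by (simp add: lin_eq)
    then have "1 / z \<in> \<real>" by (rule hypd_real[OF hA Ps])
    then have "inverse (1 / z) \<in> \<real>" by (rule Reals_inverse)
    then have zR: "z \<in> \<real>" by simp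
    then obtain r where r: "z = of_real r" by (auto elim: Reals_cases)
    have "FC (\<lambda>p. em A p + of_real r * em P p) = of_real (F (A + r *\<^sub>R P))"
      by (rule FC_em_line[OF As Ps])
    then have "F (A + r *\<^sub>R P) = 0" using z fz r by (simp add: lin_eq)
    then have "r < 0" using nz by (meson not_le)
    then show "z \<in> \<real> \<and> Re z < 0" using zR r by simp
  qed
  have q0: "poly q 0 > 0" using q[of 0] FA by simp
  have rd: "poly (pderiv q) 0 \<ge> 0 \<and> (degree q > 0 \<longrightarrow> poly (pderiv q) 0 > 0)"
    by (rule realroot_deriv_aux[OF refl roots q0])
  have d1: "((\<lambda>t. F (A + t *\<^sub>R P)) has_real_derivative trace (G ** P)) (at 0)"
    using G Ps unfolding is_gradient_def by blast
  have d2: "((\<lambda>t. F (A + t *\<^sub>R P)) has_real_derivative poly (pderiv q) 0) (at 0)"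
    unfolding q by (rule poly_DERIV)
  have tr: "trace (G ** P) = poly (pderiv q) 0" by (rule DERIV_unique[OF d1 d2])
  have quad: "x \<bullet> (G *v x) = trace (G ** P)" unfolding P_def by (rule quad_trace)
  show ?thesis
  proof (cases "degree q > 0")
    case True then show ?thesis using rd tr quad by simp
  next
    case False
    then have "degree q = 0" by simp
    then obtain a where qa: "q = [:a:]" by (rule degree_eq_zeroE)
    have qc: "poly q t = poly q 0" for t by (simp add: qa)
    have Fc: "F (A + t *\<^sub>R P) = F A" for t using q qc[of t] q[of 0] by simp
    have g: "(\<lambda>n. 1 / (real n + 1)) \<longlonglongrightarrow> 0" by (rule inv_seq_lim)
    have c1: "P \<in> closure (garding_cone F)"
    proof -
      have "(\<lambda>n. P + (1 / (real n + 1)) *\<^sub>R mat 1) \<longlonglongrightarrow> P + 0 *\<^sub>R mat 1"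
        by (intro tendsto_intros g)
      then have "(\<lambda>n. P + (1 / (real n + 1)) *\<^sub>R mat 1) \<longlonglongrightarrow> P" by simp
      moreover have "P + (1 / (real n + 1)) *\<^sub>R mat 1 \<in> garding_cone F" for n
        using Ce_I_sub[OF pd[of 1 "1 / (real n + 1)"]] by simp
      ultimately show ?thesis unfolding closure_sequential
        by (intro exI[of _ "\<lambda>n. P + (1 / (real n + 1)) *\<^sub>R mat 1"]) blast
    qed
    have wA: "e *\<^sub>R A - P \<in> Ce A" if e: "e > 0" for e
    proof -
      have "F (t *\<^sub>R A + (e *\<^sub>R A - P)) \<noteq> 0" if t: "t \<ge> 0" for t
      proof -
        define u where "u = t + e"
        have u: "u > 0" using t e by (simp add: u_def)
        have "t *\<^sub>R A + (e *\<^sub>R A - P) = u *\<^sub>R (A + (- 1 / u) *\<^sub>R P)"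
          using u by (simp add: u_def scaleR_add_right algebra_simps)
        moreover have "F (u *\<^sub>R (A + (- 1 / u) *\<^sub>R P)) = u ^ N * F (A + (- 1 / u) *\<^sub>R P)"
          by (rule F_homog) (simp add: As Ps Sym2_add Sym2_scale Sym2_diff)
        moreover have "F (A + (- 1 / u) *\<^sub>R P) = F A" by (rule Fc)
        ultimately show ?thesis using FA u by simp
      qed
      then show ?thesis using As Ps by (simp add: Ce_def Sym2_diff Sym2_scale)
    qed
    have c2: "- P \<in> closure (garding_cone F)"
    proof -
      have "(\<lambda>n. (1 / (real n + 1)) *\<^sub>R A - P) \<longlonglongrightarrow> 0 *\<^sub>R A - P"
        by (intro tendsto_intros g)
      then have "(\<lambda>n. (1 / (real n + 1)) *\<^sub>R A - P) \<longlonglongrightarrow> - P" by simp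
      moreover have "(1 / (real n + 1)) *\<^sub>R A - P \<in> garding_cone F" for n
      proof -
        have "(1 / (real n + 1)) *\<^sub>R A - P \<in> Ce A" by (rule wA) simp
        then have "(1 / (real n + 1)) *\<^sub>R A - P \<in> Ce (mat 1)" by (rule cone_sub[OF hypd_I hA AC])
        then show ?thesis by (rule Ce_I_sub)
      qed
      ultimately show ?thesis unfolding closure_sequential
        by (intro exI[of _ "\<lambda>n. (1 / (real n + 1)) *\<^sub>R A - P"]) blast
    qed
    have "P \<in> {P\<in>Sym2. pos_semidef P} \<inter> edge F"
      using Ps Psd c1 c2 by (simp add: pos_semidef_def edge_def)
    then have "P = 0" using cmpl by blast
    then show ?thesis using P0 by simp
  qed
qed

end

theorem propositionB1:
  fixes F :: "real^'n^'n \<Rightarrow> real" and N :: nat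
  assumes "complete_GD N F"
  shows "\<forall>A\<in>garding_cone F.
           (\<exists>G. is_gradient F A G) \<and> (\<forall>G. is_gradient F A G \<longrightarrow> pos_def G)"
proof -
  have gd: "GD_poly N F" and cmpl: "{P\<in>Sym2. pos_semidef P} \<inter> edge F = {0}"
    using assms by (auto simp: complete_GD_def)
  obtain c where rep: "\<And>A. A \<in> Sym2 \<Longrightarrow> F A = (\<Sum>\<alpha>\<in>{\<alpha>. (\<Sum>p\<in>UNIV. \<alpha> p) = N}.
                          c \<alpha> * (\<Prod>p\<in>UNIV. (A $ fst p $ snd p) ^ \<alpha> p))"
    using gd unfolding GD_poly_def homog_poly_Sym2_def by blast
  have FI: "F (mat 1) > 0" and rr: "\<And>A. A \<in> Sym2 \<Longrightarrow> real_rooted_along_I F A"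
    and PD: "\<And>B. B \<in> Sym2 \<Longrightarrow> pos_def B \<Longrightarrow> B \<in> garding_cone F"
    using gd unfolding GD_poly_def by auto
  have N1: "N \<ge> 1"
  proof (rule ccontr)
    assume "\<not> N \<ge> 1"
    then have N0: "N = 0" by simp
    have const: "F A = F (mat 1)" if A: "A \<in> Sym2" for A
    proof -
      have "F M = (\<Sum>\<alpha>\<in>{\<alpha>. (\<Sum>p\<in>UNIV. \<alpha> p) = 0}. c \<alpha>)" if "M \<in> Sym2" for M :: "real^'n^'n"
      proof -
        have "(\<Prod>p\<in>UNIV. (M $ fst p $ snd p) ^ \<alpha> p) = 1" if "\<alpha> \<in> {\<alpha>. (\<Sum>p\<in>UNIV. \<alpha> p) = 0}" for \<alpha> :: "'n \<times> 'n \<Rightarrow> nat"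
        proof -
          have a0: "\<alpha> p = 0" for p using that by (cases p) simp
          then show ?thesis by simp
        qed
        then show ?thesis using rep[OF \<open>M \<in> Sym2\<close>] N0 by simp
      qed
      then have "F A = (\<Sum>\<alpha>\<in>{\<alpha>. (\<Sum>p\<in>UNIV. \<alpha> p) = 0}. c \<alpha>)" "F (mat 1) = (\<Sum>\<alpha>\<in>{\<alpha>. (\<Sum>p\<in>UNIV. \<alpha> p) = 0}. c \<alpha>)"
        using A Sym2_mat by auto
      then show ?thesis by simp
    qed
    have seg: "closed_segment (mat 1) (- mat 1) \<subseteq> {A \<in> Sym2. F A \<noteq> 0}"
    proof
      fix B assume "B \<in> closed_segment (mat 1) (- (mat 1 :: real^'n^'n))"
      then obtain u where "B = (1 - u) *\<^sub>R mat 1 + u *\<^sub>R (- mat 1)" unfolding closed_segment_def by blast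
      then have "B \<in> Sym2" by (simp add: Sym2_add Sym2_scale Sym2_minus Sym2_mat Sym2_diff)
      then show "B \<in> {A \<in> Sym2. F A \<noteq> 0}" using const FI by auto
    qed
    have m1: "- mat 1 \<in> garding_cone F" and p1: "mat 1 \<in> garding_cone F"
      unfolding garding_cone_def using seg
      by (auto intro!: connected_componentI[OF connected_segment])
    have "mat 1 \<in> edge F" using m1 p1 closure_subset by (auto simp: edge_def)
    moreover have "pos_semidef (mat 1 :: real^'n^'n)" by (simp add: pos_semidef_def)
    ultimately have "mat 1 \<in> {P\<in>Sym2. pos_semidef P} \<inter> edge F" using Sym2_mat by blast
    then have "(mat 1 :: real^'n^'n) = 0" using cmpl by blast
    then have "(mat 1 :: real^'n^'n) $ undefined $ undefined = 0" by simp
    then show False by (simp add: mat_def)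
  qed
  interpret G: GDloc F N c using rep FI rr N1 by unfold_locales auto
  show ?thesis
  proof (intro ballI conjI allI impI)
    fix A assume A: "A \<in> garding_cone F"
    have "A \<in> Sym2" using G.Ce_Sym2[OF G.cone_I[OF A]] .
    then show "\<exists>G. is_gradient F A G" by (rule G.grad_exists)
    fix Gm assume Gm: "is_gradient F A Gm"
    show "pos_def Gm" unfolding pos_def_def
      using G.main_pos[OF PD cmpl A _ Gm] by blast
  qed
qed

end
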